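(* In the energy-constrained joint sampling-and-routing problem described in the context, the optimal long-term average AoI $\lambda^\star$ satisfies $$0\le\lambda^\star\le\min_{k\in\mathcal{R}_\infty}\left(\frac{3\mu_k+w_k}{2}+\frac{\sigma_k^2}{2(\mu_k+w_k)}\right),\qquad w_k=\left(\frac{C_s+G_k\mu_k}{E_{\max}}-\mu_k\right)^+.$$
   Context: Routes and availability. There are $N$ routes. Route $k$ is available at each epoch independently with probability $p_k\in(0,1]$, and the set $\mathcal{R}_\infty=\{k:p_k=1\}$ of always-available routes is nonempty. Delays. Transmission delays are nonnegative and i.i.d. across epochs (possibly correlated across routes within an epoch). Route $k$ has delay distribution $Q_k$ with finite mean $\mu_k>0$ and finite variance $\sigma_k^2$. Operation. The system is generate-at-will and non-preemptive. After each delivery $D_i$, the controller picks an available route $R_i$ and a finite waiting time $Z_i\ge0$. The next sample is generated at $S_{i+1}=D_i+Z_i$ and delivered at $D_{i+1}=S_{i+1}+Y_{i+1,R_i}$. AoI. The AoI is $\Delta(t)=t-S_i$ for $D_i\le t<D_{i+1}$. Energy. Each sample costs $C_s>0$, and route $k$ costs $G_k\ge0$ per unit of transmission time. Hence update $i+1$ costs $E_{i+1}=C_s+G_{R_i}Y_{i+1,R_i}$. Optimization problem. $\lambda^\star$ is the minimum over causal stationary policies of $\limsup_{T\to\infty}\frac1T\mathbb{E}[\int_0^T\Delta(t)dt]$, subject to $\limsup_n \mathbb{E}[\sum_{i<n}E_{i+1}]/\mathbb{E}[\sum_{i<n}(Z_i+Y_{i+1,R_i})]\le E_{\max}$, where $E_{\max}>0$.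 *)

theory Defs
  imports "HOL-Probability.Probability"
begin

(* Model conventions:
   - routes: a finite type 'r;  per-epoch randomness: an outcome of type 'e drawn from M0;
     the whole sample path is a stream of i.i.d. epoch outcomes, measure  stream_space M0.
   - epoch j outcome e gives the availability vector  A e :: 'r => bool  (availability at the
     decision made after delivery D_j) and the delay vector  Y e :: 'r => real  (delays of the
     transmission delivered at D_j, i.e. Y_{j,k}).
   - a (deterministic) stationary policy maps the current state
       (Delta(D_i) = Y_i, availability vector at epoch i)  to  (route R_i, waiting time Z_i).
   - initial condition: S_0 = D_0 = 0 (so Y_0 = 0). *)

type_synonym ('r) policy = "real \<Rightarrow> ('r \<Rightarrow> bool) \<Rightarrow> 'r \<times> real"

text \<open>Y_i: the delay of the i-th update, i.e. the AoI right after delivery D_i.\<close>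
fun lastdelay :: "'r policy \<Rightarrow> ('e \<Rightarrow> 'r \<Rightarrow> bool) \<Rightarrow> ('e \<Rightarrow> 'r \<Rightarrow> real)
                   \<Rightarrow> 'e stream \<Rightarrow> nat \<Rightarrow> real" where
  "lastdelay \<pi> A Y \<omega> 0 = 0"
| "lastdelay \<pi> A Y \<omega> (Suc i) =
     Y (\<omega> !! Suc i) (fst (\<pi> (lastdelay \<pi> A Y \<omega> i) (A (\<omega> !! i))))"

definition route :: "'r policy \<Rightarrow> ('e \<Rightarrow> 'r \<Rightarrow> bool) \<Rightarrow> ('e \<Rightarrow> 'r \<Rightarrow> real)
                   \<Rightarrow> 'e stream \<Rightarrow> nat \<Rightarrow> 'r" where
  "route \<pi> A Y \<omega> i = fst (\<pi> (lastdelay \<pi> A Y \<omega> i) (A (\<omega> !! i)))"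

definition wait :: "'r policy \<Rightarrow> ('e \<Rightarrow> 'r \<Rightarrow> bool) \<Rightarrow> ('e \<Rightarrow> 'r \<Rightarrow> real)
                   \<Rightarrow> 'e stream \<Rightarrow> nat \<Rightarrow> real" where
  "wait \<pi> A Y \<omega> i = snd (\<pi> (lastdelay \<pi> A Y \<omega> i) (A (\<omega> !! i)))"

fun deliv :: "'r policy \<Rightarrow> ('e \<Rightarrow> 'r \<Rightarrow> bool) \<Rightarrow> ('e \<Rightarrow> 'r \<Rightarrow> real)
                   \<Rightarrow> 'e stream \<Rightarrow> nat \<Rightarrow> real" where
  "deliv \<pi> A Y \<omega> 0 = 0"
| "deliv \<pi> A Y \<omega> (Suc i) = deliv \<pi> A Y \<omega> i + wait \<pi> A Y \<omega> i + lastdelay \<pi> A Y \<omega> (Suc i)"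

fun samp :: "'r policy \<Rightarrow> ('e \<Rightarrow> 'r \<Rightarrow> bool) \<Rightarrow> ('e \<Rightarrow> 'r \<Rightarrow> real)
                   \<Rightarrow> 'e stream \<Rightarrow> nat \<Rightarrow> real" where
  "samp \<pi> A Y \<omega> 0 = 0"
| "samp \<pi> A Y \<omega> (Suc i) = deliv \<pi> A Y \<omega> i + wait \<pi> A Y \<omega> i"

definition aoi :: "'r policy \<Rightarrow> ('e \<Rightarrow> 'r \<Rightarrow> bool) \<Rightarrow> ('e \<Rightarrow> 'r \<Rightarrow> real)
                   \<Rightarrow> 'e stream \<Rightarrow> real \<Rightarrow> ennreal" where
  "aoi \<pi> A Y \<omega> t = (\<Sum>i. indicator {deliv \<pi> A Y \<omega> i ..< deliv \<pi> A Y \<omega> (Suc i)} t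
                           * ennreal (t - samp \<pi> A Y \<omega> i))"

definition admissible :: "'r policy \<Rightarrow> bool" where
  "admissible \<pi> \<longleftrightarrow>
     (\<forall>y a. (\<exists>k. a k) \<longrightarrow> a (fst (\<pi> y a))) \<and>
     (\<forall>y a. snd (\<pi> y a) \<ge> 0) \<and>
     (\<forall>a. (\<lambda>y. fst (\<pi> y a)) \<in> measurable borel (count_space UNIV)) \<and>
     (\<forall>a. (\<lambda>y. snd (\<pi> y a)) \<in> borel_measurable borel)"

definition avg_aoi :: "'e measure \<Rightarrow> ('e \<Rightarrow> 'r \<Rightarrow> bool) \<Rightarrow> ('e \<Rightarrow> 'r \<Rightarrow> real)
                       \<Rightarrow> 'r policy \<Rightarrow> ennreal" where
  "avg_aoi M0 A Y \<pi> = Limsup at_top (\<lambda>T::real.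
      (\<integral>\<^sup>+ \<omega>. (\<integral>\<^sup>+ t. indicator {0..T} t * aoi \<pi> A Y \<omega> t \<partial>lborel) \<partial>stream_space M0)
        / ennreal T)"

definition avg_power :: "'e measure \<Rightarrow> ('e \<Rightarrow> 'r \<Rightarrow> bool) \<Rightarrow> ('e \<Rightarrow> 'r \<Rightarrow> real)
                       \<Rightarrow> real \<Rightarrow> ('r \<Rightarrow> real) \<Rightarrow> 'r policy \<Rightarrow> ennreal" where
  "avg_power M0 A Y Cs G \<pi> = limsup (\<lambda>n.
      (\<integral>\<^sup>+ \<omega>. (\<Sum>i<n. ennreal (Cs + G (route \<pi> A Y \<omega> i) * lastdelay \<pi> A Y \<omega> (Suc i)))
           \<partial>stream_space M0)
      / (\<integral>\<^sup>+ \<omega>. (\<Sum>i<n. ennreal (wait \<pi> A Y \<omega> i + lastdelay \<pi> A Y \<omega> (Suc i)))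
           \<partial>stream_space M0))"

definition opt_aoi :: "'e measure \<Rightarrow> ('e \<Rightarrow> 'r \<Rightarrow> bool) \<Rightarrow> ('e \<Rightarrow> 'r \<Rightarrow> real)
                       \<Rightarrow> real \<Rightarrow> ('r \<Rightarrow> real) \<Rightarrow> real \<Rightarrow> ennreal" where
  "opt_aoi M0 A Y Cs G Emax =
     (INF \<pi> \<in> {\<pi>. admissible \<pi> \<and> avg_power M0 A Y Cs G \<pi> \<le> ennreal Emax}. avg_aoi M0 A Y \<pi>)"

end

theory Submission
  imports Defs
begin


lemma indep_snth:
  fixes M0 :: "'e measure" and h :: "'e \<Rightarrow> ennreal"
  assumes M0: "prob_space M0" and hm: "h \<in> borel_measurable M0"
  shows "f \<in> borel_measurable (stream_space M0) \<Longrightarrow> (\<And>\<omega> \<omega>'. (\<forall>j<n. \<omega>!!j = \<omega>'!!j) \<Longrightarrow> f \<omega> = f \<omega>')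
    \<Longrightarrow> (\<integral>\<^sup>+\<omega>. f \<omega> * h (\<omega>!!n) \<partial>stream_space M0) = (\<integral>\<^sup>+\<omega>. f \<omega> \<partial>stream_space M0) * (\<integral>\<^sup>+x. h x \<partial>M0)"
proof (induction n arbitrary: f)
  case 0
  interpret prob_space M0 by (rule M0)
  interpret S: prob_space "stream_space M0" by (rule prob_space_stream_space)
  have fc: "f \<omega> = f undefined" for \<omega> using 0(2) by auto
  have "(\<integral>\<^sup>+\<omega>. f \<omega> * h (\<omega>!!0) \<partial>stream_space M0) = f undefined * (\<integral>\<^sup>+\<omega>. h (\<omega>!!0) \<partial>stream_space M0)"
    by (subst fc) (rule nn_integral_cmult, use hm in measurable)
  also have "(\<integral>\<^sup>+\<omega>. h (\<omega>!!0) \<partial>stream_space M0) = (\<integral>\<^sup>+x. h x \<partial>M0)"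
    by (subst nn_integral_stream_space) (use hm in \<open>auto simp: S.emeasure_space_1\<close>)
  also have "f undefined = (\<integral>\<^sup>+\<omega>. f \<omega> \<partial>stream_space M0)"
    by (subst fc) (simp add: S.emeasure_space_1)
  finally show ?case .
next
  case (Suc n)
  interpret prob_space M0 by (rule M0)
  have m1[measurable]: "f \<in> borel_measurable (stream_space M0)" by fact
  note hm[measurable]
  have "(\<integral>\<^sup>+\<omega>. f \<omega> * h (\<omega>!!Suc n) \<partial>stream_space M0)
     = (\<integral>\<^sup>+x. (\<integral>\<^sup>+X. f (x ## X) * h (X!!n) \<partial>stream_space M0) \<partial>M0)"
    by (subst nn_integral_stream_space) auto
  also have "\<dots> = (\<integral>\<^sup>+x. (\<integral>\<^sup>+X. f (x ## X) \<partial>stream_space M0) * (\<integral>\<^sup>+x. h x \<partial>M0) \<partial>M0)"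
  proof (rule nn_integral_cong)
    fix x assume x: "x \<in> space M0"
    show "(\<integral>\<^sup>+X. f (x ## X) * h (X!!n) \<partial>stream_space M0) = (\<integral>\<^sup>+X. f (x ## X) \<partial>stream_space M0) * (\<integral>\<^sup>+x. h x \<partial>M0)"
    proof (rule Suc.IH)
      show "(\<lambda>X. f (x ## X)) \<in> borel_measurable (stream_space M0)" using x by measurable
      fix \<omega> \<omega>' :: "'e stream" assume "\<forall>j<n. \<omega>!!j = \<omega>'!!j"
      then have "\<forall>j<Suc n. (x##\<omega>)!!j = (x##\<omega>')!!j" by (auto simp: Stream_snth split: nat.split)
      then show "f (x ## \<omega>) = f (x ## \<omega>')" by (rule Suc.prems(2))
    qed
  qed
  also have "\<dots> = (\<integral>\<^sup>+x. (\<integral>\<^sup>+X. f (x ## X) \<partial>stream_space M0) \<partial>M0) * (\<integral>\<^sup>+x. h x \<partial>M0)"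
  proof (rule nn_integral_multc)
    interpret S: prob_space "stream_space M0" by (rule prob_space_stream_space)
    show "(\<lambda>x. \<integral>\<^sup>+X. f (x ## X) \<partial>stream_space M0) \<in> borel_measurable M0"
      by (rule S.borel_measurable_nn_integral) measurable
  qed
  also have "(\<integral>\<^sup>+x. (\<integral>\<^sup>+X. f (x ## X) \<partial>stream_space M0) \<partial>M0) = (\<integral>\<^sup>+\<omega>. f \<omega> \<partial>stream_space M0)"
    by (subst nn_integral_stream_space) auto
  finally show ?case .
qed




lemma area_integral:
  fixes a b c :: real
  assumes "c \<le> a" "a \<le> b"
  shows "(\<integral>\<^sup>+t. indicator {a..<b} t * ennreal (t - c) \<partial>lborel) = ennreal (((b-c)\<^sup>2 - (a-c)\<^sup>2)/2)"
proof -
  have "(\<integral>\<^sup>+t. indicator {a..<b} t * ennreal (t - c) \<partial>lborel) = (\<integral>\<^sup>+t. ennreal (t - c) * indicator {a..b} t \<partial>lborel)"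
  proof (rule nn_integral_cong_AE)
    show "AE t in lborel. indicator {a..<b} t * ennreal (t - c) = ennreal (t - c) * indicator {a..b} t"
      using AE_lborel_singleton[of b] by eventually_elim (auto split: split_indicator)
  qed
  also have "\<dots> = ennreal ((b-c)\<^sup>2/2 - (a-c)\<^sup>2/2)"
    by (rule nn_integral_FTC_Icc[where F="\<lambda>t. (t-c)\<^sup>2/2"]) 
       (use assms in \<open>auto intro!: derivative_eq_intros\<close>)
  also have "\<dots> = ennreal (((b-c)\<^sup>2 - (a-c)\<^sup>2)/2)"
    by (simp add: diff_divide_distrib)
  finally show ?thesis .
qed

lemma renewal_pointwise:
  fixes X :: "nat \<Rightarrow> real" and T \<epsilon> :: real
  assumes X: "\<And>j. 0 \<le> X j" and T: "0 \<le> T" and e: "0 < \<epsilon>"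
  shows "(\<Sum>i<n. if (\<Sum>j<i. X j) \<le> T then X i else 0)
      \<le> T + \<epsilon> * (\<Sum>i<n. if (\<Sum>j<i. X j) \<le> T then (X i)\<^sup>2 else 0) + 1/(4*\<epsilon>)"
proof -
  define S where "S n = (\<Sum>i<n. if (\<Sum>j<i. X j) \<le> T then X i else 0)" for n
  define Q where "Q n = (\<Sum>i<n. if (\<Sum>j<i. X j) \<le> T then (X i)\<^sup>2 else 0)" for n
  define D where "D n = (\<Sum>j<n. X j)" for n
  have Qnn: "0 \<le> Q n" for n unfolding Q_def by (intro sum_nonneg) auto
  have quad: "X i \<le> \<epsilon> * (X i)\<^sup>2 + 1/(4*\<epsilon>)" for i
  proof -
    have "0 \<le> (2*\<epsilon>*X i - 1)\<^sup>2" by simp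
    then have "4*\<epsilon>*X i \<le> 4*\<epsilon>*(\<epsilon> * (X i)\<^sup>2 + 1/(4*\<epsilon>))"
      using e by (simp add: power2_eq_square algebra_simps)
    then show ?thesis using e by simp
  qed
  have "(D n \<le> T \<longrightarrow> S n = D n) \<and> S n \<le> T + \<epsilon> * Q n + (if D n \<le> T then 0 else 1/(4*\<epsilon>))"
  proof (induction n)
    case 0
    then show ?case using T by (simp add: S_def Q_def D_def)
  next
    case (Suc n)
    have SS: "S (Suc n) = S n + (if D n \<le> T then X n else 0)" by (simp add: S_def D_def)
    have QS: "Q (Suc n) = Q n + (if D n \<le> T then (X n)\<^sup>2 else 0)" by (simp add: Q_def D_def)
    have DS: "D (Suc n) = D n + X n" by (simp add: D_def)
    show ?case
    proof (cases "D n \<le> T")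
      case True
      then have Sn: "S n = D n" using Suc.IH by auto
      show ?thesis
      proof (cases "D (Suc n) \<le> T")
        case True2: True
        have "0 \<le> \<epsilon> * Q (Suc n)" using Qnn[of "Suc n"] e by simp
        then show ?thesis using True True2 Sn SS DS by auto
      next
        case False
        have "S (Suc n) = D n + X n" using SS Sn True by simp
        also have "\<dots> \<le> T + \<epsilon> * (X n)\<^sup>2 + 1/(4*\<epsilon>)" using True quad[of n] by linarith
        also have "\<epsilon> * (X n)\<^sup>2 \<le> \<epsilon> * Q (Suc n)" using QS True Qnn[of n] e by auto
        finally show ?thesis using False by auto
      qed
    next
      case False
      then have "\<not> D (Suc n) \<le> T" using DS X[of n] by auto
      then show ?thesis using False Suc.IH SS QS by auto
    qed
  qed
  moreover have q4: "0 \<le> 1/(4*\<epsilon>)" using e by simp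
  then have "(if D n \<le> T then 0 else 1/(4*\<epsilon>)) \<le> 1/(4*\<epsilon>)" by simp
  ultimately have "S n \<le> T + \<epsilon> * Q n + 1/(4*\<epsilon>)"
    by linarith
  then show ?thesis unfolding S_def Q_def .
qed




lemma aoi_bound:
  fixes d s :: "nat \<Rightarrow> real" and T :: real
  assumes sd: "\<And>i. s i \<le> d i" and dmono: "\<And>i. d i \<le> d (Suc i)"
  shows "(\<integral>\<^sup>+t. indicator {0..T} t * (\<Sum>i. indicator {d i..<d (Suc i)} t * ennreal (t - s i)) \<partial>lborel)
     \<le> (\<Sum>i. (if d i \<le> T then ennreal (((d (Suc i) - s i)\<^sup>2 - (d i - s i)\<^sup>2)/2) else 0))"
proof -
  have "(\<integral>\<^sup>+t. indicator {0..T} t * (\<Sum>i. indicator {d i..<d (Suc i)} t * ennreal (t - s i)) \<partial>lborel)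
     = (\<integral>\<^sup>+t. (\<Sum>i. indicator {0..T} t * (indicator {d i..<d (Suc i)} t * ennreal (t - s i))) \<partial>lborel)"
    by simp
  also have "\<dots> = (\<Sum>i. \<integral>\<^sup>+t. indicator {0..T} t * (indicator {d i..<d (Suc i)} t * ennreal (t - s i)) \<partial>lborel)"
    by (rule nn_integral_suminf) measurable
  also have "\<dots> \<le> (\<Sum>i. (if d i \<le> T then ennreal (((d (Suc i) - s i)\<^sup>2 - (d i - s i)\<^sup>2)/2) else 0))"
  proof (rule suminf_le)
    fix i
    show "(\<integral>\<^sup>+t. indicator {0..T} t * (indicator {d i..<d (Suc i)} t * ennreal (t - s i)) \<partial>lborel)
        \<le> (if d i \<le> T then ennreal (((d (Suc i) - s i)\<^sup>2 - (d i - s i)\<^sup>2)/2) else 0)"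
    proof (cases "d i \<le> T")
      case True
      have "(\<integral>\<^sup>+t. indicator {0..T} t * (indicator {d i..<d (Suc i)} t * ennreal (t - s i)) \<partial>lborel)
          \<le> (\<integral>\<^sup>+t. indicator {d i..<d (Suc i)} t * ennreal (t - s i) \<partial>lborel)"
        by (intro nn_integral_mono) (auto split: split_indicator)
      also have "\<dots> = ennreal (((d (Suc i) - s i)\<^sup>2 - (d i - s i)\<^sup>2)/2)"
        by (rule area_integral) (use sd dmono in auto)
      finally show ?thesis using True by simp
    next
      case False
      have "\<And>t. indicator {0..T} t * (indicator {d i..<d (Suc i)} t * ennreal (t - s i)) = (0::ennreal)"
        using False by (auto split: split_indicator)
      then have "(\<lambda>t. indicator {0..T} t * (indicator {d i..<d (Suc i)} t * ennreal (t - s i))) = (\<lambda>t. 0::ennreal)"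
        by (intro ext)
      then show ?thesis using False by (simp del: mult_eq_0_iff)
    qed
  qed auto
  finally show ?thesis .
qed




locale rr =
  fixes M0 :: "'e measure" and Yc :: "'e \<Rightarrow> real" and w \<mu> s :: real
  assumes M0: "prob_space M0" and Yc_meas[measurable]: "Yc \<in> borel_measurable M0"
    and Yc_nn: "\<And>e. 0 \<le> Yc e" and w_pos: "0 < w" and mu_nn: "0 \<le> \<mu>" and s_nn: "0 \<le> s"
    and Ymean: "(\<integral>\<^sup>+e. ennreal (Yc e) \<partial>M0) = ennreal \<mu>"
    and Ysq: "(\<integral>\<^sup>+e. ennreal ((w + Yc e)\<^sup>2) \<partial>M0) = ennreal s"
begin

definition rX :: "nat \<Rightarrow> 'e stream \<Rightarrow> real" where "rX j \<omega> = w + Yc (\<omega> !! Suc j)"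
definition rD :: "nat \<Rightarrow> 'e stream \<Rightarrow> real" where "rD i \<omega> = (\<Sum>j<i. rX j \<omega>)"
definition rL :: "nat \<Rightarrow> 'e stream \<Rightarrow> real" where "rL i \<omega> = (case i of 0 \<Rightarrow> 0 | Suc j \<Rightarrow> Yc (\<omega> !! Suc j))"
definition rind :: "real \<Rightarrow> nat \<Rightarrow> 'e stream \<Rightarrow> ennreal" where "rind T i \<omega> = (if rD i \<omega> \<le> T then 1 else 0)"
definition rN :: "real \<Rightarrow> nat" where "rN T = nat \<lceil>T/w\<rceil> + 1"
definition rU :: "real \<Rightarrow> ennreal" where "rU T = (\<Sum>i<rN T. \<integral>\<^sup>+\<omega>. rind T i \<omega> \<partial>stream_space M0)"

lemma S: "prob_space (stream_space M0)"
  using M0 by (rule prob_space.prob_space_stream_space)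

lemma rX_meas[measurable]: "rX j \<in> borel_measurable (stream_space M0)"
  unfolding rX_def by measurable
lemma rD_meas[measurable]: "rD i \<in> borel_measurable (stream_space M0)"
  unfolding rD_def by measurable
lemma rL_meas[measurable]: "rL i \<in> borel_measurable (stream_space M0)"
  unfolding rL_def by (cases i) simp_all
lemma rind_meas[measurable]: "rind T i \<in> borel_measurable (stream_space M0)"
  unfolding rind_def by measurable

lemma rX_nn: "0 \<le> rX j \<omega>" unfolding rX_def using Yc_nn w_pos by (simp add: add_nonneg_nonneg)
lemma rL_nn: "0 \<le> rL i \<omega>" unfolding rL_def using Yc_nn by (cases i) auto

lemma rD_dep: "\<forall>j<Suc i. \<omega>!!j = \<omega>'!!j \<Longrightarrow> rD i \<omega> = rD i \<omega>'"
  unfolding rD_def rX_def by (intro sum.cong) auto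
lemma rind_dep: "\<forall>j<Suc i. \<omega>!!j = \<omega>'!!j \<Longrightarrow> rind T i \<omega> = rind T i \<omega>'"
  unfolding rind_def using rD_dep by metis
lemma rL_dep: "\<forall>j<Suc i. \<omega>!!j = \<omega>'!!j \<Longrightarrow> rL i \<omega> = rL i \<omega>'"
  unfolding rL_def by (cases i) auto

lemma rD_ge: "real i * w \<le> rD i \<omega>"
proof -
  have "(\<Sum>j<i. w) \<le> rD i \<omega>" unfolding rD_def rX_def using Yc_nn by (intro sum_mono) auto
  then show ?thesis by simp
qed

lemma rD_mono: "rD i \<omega> \<le> rD (Suc i) \<omega>"
  unfolding rD_def using rX_nn[of i \<omega>] by simp

lemma rind_zero: assumes "rN T \<le> i" shows "rind T i \<omega> = 0"
proof -
  have "T < real i * w"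
  proof (cases "0 \<le> T")
    case True
    have "T/w \<le> real (nat \<lceil>T/w\<rceil>)" by linarith
    also have "\<dots> < real i" using assms unfolding rN_def by simp
    finally show ?thesis using w_pos by (simp add: field_simps)
  next
    case False
    then show ?thesis using w_pos by (smt (verit) mult_nonneg_nonneg of_nat_0_le_iff)
  qed
  then show ?thesis using rD_ge[of i \<omega>] unfolding rind_def by auto
qed

lemma indep:
  assumes "f \<in> borel_measurable (stream_space M0)" "\<And>\<omega> \<omega>'. (\<forall>j<Suc i. \<omega>!!j = \<omega>'!!j) \<Longrightarrow> f \<omega> = f \<omega>'"
    and "h \<in> borel_measurable M0"
  shows "(\<integral>\<^sup>+\<omega>. f \<omega> * h (\<omega>!!Suc i) \<partial>stream_space M0) = (\<integral>\<^sup>+\<omega>. f \<omega> \<partial>stream_space M0) * (\<integral>\<^sup>+x. h x \<partial>M0)"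
  by (rule indep_snth[OF M0 assms(3) assms(1)]) (use assms(2) in blast)

lemma EX1: "(\<integral>\<^sup>+e. ennreal (w + Yc e) \<partial>M0) = ennreal (w + \<mu>)"
proof -
  interpret prob_space M0 by (rule M0)
  have "(\<integral>\<^sup>+e. ennreal (w + Yc e) \<partial>M0) = (\<integral>\<^sup>+e. ennreal w + ennreal (Yc e) \<partial>M0)"
    using w_pos Yc_nn by (intro nn_integral_cong) (simp add: ennreal_plus)
  also have "\<dots> = ennreal w + ennreal \<mu>"
    by (subst nn_integral_add) (auto simp: Ymean emeasure_space_1)
  finally show ?thesis using w_pos mu_nn by (simp add: ennreal_plus)
qed

lemma EX2: "(\<integral>\<^sup>+e. ennreal ((w + Yc e)\<^sup>2 / 2) \<partial>M0) = ennreal (s / 2)"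
proof -
  have "(\<integral>\<^sup>+e. ennreal ((w + Yc e)\<^sup>2 / 2) \<partial>M0) = (\<integral>\<^sup>+e. ennreal ((w + Yc e)\<^sup>2) * ennreal (1/2) \<partial>M0)"
    by (intro nn_integral_cong) (subst ennreal_mult[symmetric], auto)
  also have "\<dots> = ennreal s * ennreal (1/2)"
    by (subst nn_integral_multc) (auto simp: Ysq)
  also have "\<dots> = ennreal (s / 2)" using s_nn by (subst ennreal_mult[symmetric]) auto
  finally show ?thesis .
qed

end



lemma sum_shift_le:
  fixes x b :: "nat \<Rightarrow> ennreal"
  assumes "\<And>i. x i \<le> (case i of 0 \<Rightarrow> 0 | Suc j \<Rightarrow> b j)"
  shows "(\<Sum>i<n. x i) \<le> (\<Sum>i<n. b i)"
proof (cases n)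
  case 0 then show ?thesis by simp
next
  case (Suc m)
  have "(\<Sum>i<Suc m. x i) = x 0 + (\<Sum>i<m. x (Suc i))" by (rule sum.lessThan_Suc_shift)
  also have "\<dots> \<le> 0 + (\<Sum>i<m. b i)"
  proof (intro add_mono sum_mono)
    show "x 0 \<le> 0" using assms[of 0] by simp
    fix i show "x (Suc i) \<le> b i" using assms[of "Suc i"] by simp
  qed
  also have "\<dots> \<le> (\<Sum>i<Suc m. b i)" by simp
  finally show ?thesis using Suc by simp
qed

context rr begin

lemma main_bound:
  "(\<integral>\<^sup>+\<omega>. (\<Sum>i<rN T. rind T i \<omega> * ennreal (rL i \<omega> * rX i \<omega> + (rX i \<omega>)\<^sup>2/2)) \<partial>stream_space M0)
    \<le> rU T * ennreal (\<mu>*(w+\<mu>) + s/2)"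
proof -
  define b where "b i = (\<integral>\<^sup>+\<omega>. rind T i \<omega> \<partial>stream_space M0)" for i
  define x where "x i = (\<integral>\<^sup>+\<omega>. rind T i \<omega> * ennreal (rL i \<omega>) \<partial>stream_space M0)" for i
  have trm: "(\<integral>\<^sup>+\<omega>. rind T i \<omega> * ennreal (rL i \<omega> * rX i \<omega> + (rX i \<omega>)\<^sup>2/2) \<partial>stream_space M0)
      = x i * ennreal (w+\<mu>) + b i * ennreal (s/2)" for i
  proof -
    have "(\<integral>\<^sup>+\<omega>. rind T i \<omega> * ennreal (rL i \<omega> * rX i \<omega> + (rX i \<omega>)\<^sup>2/2) \<partial>stream_space M0)
      = (\<integral>\<^sup>+\<omega>. (rind T i \<omega> * ennreal (rL i \<omega>)) * ennreal (w + Yc (\<omega>!!Suc i))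
           + rind T i \<omega> * ennreal ((w + Yc (\<omega>!!Suc i))\<^sup>2/2) \<partial>stream_space M0)"
    proof (intro nn_integral_cong)
      fix \<omega>
      have "ennreal (rL i \<omega> * rX i \<omega> + (rX i \<omega>)\<^sup>2/2) = ennreal (rL i \<omega>) * ennreal (rX i \<omega>) + ennreal ((rX i \<omega>)\<^sup>2/2)"
        using rL_nn[of i \<omega>] rX_nn[of i \<omega>] by (simp add: ennreal_plus ennreal_mult)
      then show "rind T i \<omega> * ennreal (rL i \<omega> * rX i \<omega> + (rX i \<omega>)\<^sup>2/2)
         = (rind T i \<omega> * ennreal (rL i \<omega>)) * ennreal (w + Yc (\<omega>!!Suc i)) + rind T i \<omega> * ennreal ((w + Yc (\<omega>!!Suc i))\<^sup>2/2)"
        by (simp add: rX_def distrib_left mult.assoc)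
    qed
    also have "\<dots> = (\<integral>\<^sup>+\<omega>. (rind T i \<omega> * ennreal (rL i \<omega>)) * ennreal (w + Yc (\<omega>!!Suc i)) \<partial>stream_space M0)
       + (\<integral>\<^sup>+\<omega>. rind T i \<omega> * ennreal ((w + Yc (\<omega>!!Suc i))\<^sup>2/2) \<partial>stream_space M0)"
      by (rule nn_integral_add) measurable
    also have "(\<integral>\<^sup>+\<omega>. (rind T i \<omega> * ennreal (rL i \<omega>)) * ennreal (w + Yc (\<omega>!!Suc i)) \<partial>stream_space M0)
       = x i * ennreal (w+\<mu>)"
      unfolding x_def EX1[symmetric]
      by (rule indep[where h="\<lambda>e. ennreal (w + Yc e)"]) (auto, metis rind_dep rL_dep)
    also have "(\<integral>\<^sup>+\<omega>. rind T i \<omega> * ennreal ((w + Yc (\<omega>!!Suc i))\<^sup>2/2) \<partial>stream_space M0)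
       = b i * ennreal (s/2)"
      unfolding b_def EX2[symmetric]
      by (rule indep[where h="\<lambda>e. ennreal ((w + Yc e)\<^sup>2/2)"]) (auto dest: rind_dep[where T=T])
    finally show ?thesis .
  qed
  have xb: "x i \<le> (case i of 0 \<Rightarrow> 0 | Suc j \<Rightarrow> b j * ennreal \<mu>)" for i
  proof (cases i)
    case 0 then show ?thesis by (simp add: x_def rL_def)
  next
    case (Suc j)
    have "x i = (\<integral>\<^sup>+\<omega>. rind T (Suc j) \<omega> * ennreal (Yc (\<omega>!!Suc j)) \<partial>stream_space M0)"
      by (simp add: x_def Suc rL_def)
    also have "\<dots> \<le> (\<integral>\<^sup>+\<omega>. rind T j \<omega> * ennreal (Yc (\<omega>!!Suc j)) \<partial>stream_space M0)"
    proof (intro nn_integral_mono mult_right_mono)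
      fix \<omega> show "rind T (Suc j) \<omega> \<le> rind T j \<omega>"
        unfolding rind_def using rD_mono[of j \<omega>] by auto
    qed simp
    also have "\<dots> = b j * ennreal \<mu>"
      unfolding b_def Ymean[symmetric]
      by (rule indep[where h="\<lambda>e. ennreal (Yc e)"]) (auto dest: rind_dep[where T=T])
    finally show ?thesis using Suc by simp
  qed
  have "(\<integral>\<^sup>+\<omega>. (\<Sum>i<rN T. rind T i \<omega> * ennreal (rL i \<omega> * rX i \<omega> + (rX i \<omega>)\<^sup>2/2)) \<partial>stream_space M0)
     = (\<Sum>i<rN T. x i * ennreal (w+\<mu>) + b i * ennreal (s/2))"
    by (subst nn_integral_sum) (auto simp: trm)
  also have "\<dots> = (\<Sum>i<rN T. x i) * ennreal (w+\<mu>) + (\<Sum>i<rN T. b i) * ennreal (s/2)"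
    by (simp add: sum.distrib sum_distrib_right)
  also have "\<dots> \<le> (\<Sum>i<rN T. b i * ennreal \<mu>) * ennreal (w+\<mu>) + (\<Sum>i<rN T. b i) * ennreal (s/2)"
  proof -
    have "(\<Sum>i<rN T. x i) \<le> (\<Sum>i<rN T. b i * ennreal \<mu>)"
      by (rule sum_shift_le[where b="\<lambda>j. b j * ennreal \<mu>"]) (rule xb)
    then show ?thesis by (intro add_mono mult_right_mono) auto
  qed
  also have "\<dots> = rU T * (ennreal \<mu> * ennreal (w+\<mu>) + ennreal (s/2))"
    unfolding rU_def b_def[symmetric] by (simp add: sum_distrib_right distrib_left mult.assoc)
  also have "ennreal \<mu> * ennreal (w+\<mu>) + ennreal (s/2) = ennreal (\<mu>*(w+\<mu>) + s/2)"
    using mu_nn w_pos s_nn by (simp add: ennreal_mult ennreal_plus)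
  finally show ?thesis .
qed

end



context rr begin

lemma ind_real: "rind T i \<omega> * ennreal r = ennreal (if rD i \<omega> \<le> T then r else 0)"
  unfolding rind_def by auto

lemma renewal:
  assumes T: "0 \<le> T" and e: "0 < \<epsilon>"
  shows "rU T * ennreal (w+\<mu>) \<le> ennreal T + ennreal \<epsilon> * (rU T * ennreal s) + ennreal (1/(4*\<epsilon>))"
proof -
  interpret S: prob_space "stream_space M0" by (rule S)
  define n where "n = rN T"
  define G1 where "G1 \<omega> = (\<Sum>i<n. rind T i \<omega> * ennreal (rX i \<omega>))" for \<omega>
  define G2 where "G2 \<omega> = (\<Sum>i<n. rind T i \<omega> * ennreal ((rX i \<omega>)\<^sup>2))" for \<omega>
  have [measurable]: "G1 \<in> borel_measurable (stream_space M0)" "G2 \<in> borel_measurable (stream_space M0)"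
    unfolding G1_def G2_def by measurable
  have I1: "(\<integral>\<^sup>+\<omega>. G1 \<omega> \<partial>stream_space M0) = rU T * ennreal (w+\<mu>)"
  proof -
    have "(\<integral>\<^sup>+\<omega>. G1 \<omega> \<partial>stream_space M0) = (\<Sum>i<n. \<integral>\<^sup>+\<omega>. rind T i \<omega> * ennreal (w + Yc (\<omega>!!Suc i)) \<partial>stream_space M0)"
      unfolding G1_def rX_def by (rule nn_integral_sum) measurable
    also have "\<dots> = (\<Sum>i<n. (\<integral>\<^sup>+\<omega>. rind T i \<omega> \<partial>stream_space M0) * ennreal (w+\<mu>))"
      unfolding EX1[symmetric]
      by (intro sum.cong refl indep[where h="\<lambda>e. ennreal (w + Yc e)"]) (auto dest: rind_dep[where T=T])
    finally show ?thesis unfolding rU_def n_def by (simp add: sum_distrib_right)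
  qed
  have I2: "(\<integral>\<^sup>+\<omega>. G2 \<omega> \<partial>stream_space M0) = rU T * ennreal s"
  proof -
    have "(\<integral>\<^sup>+\<omega>. G2 \<omega> \<partial>stream_space M0) = (\<Sum>i<n. \<integral>\<^sup>+\<omega>. rind T i \<omega> * ennreal ((w + Yc (\<omega>!!Suc i))\<^sup>2) \<partial>stream_space M0)"
      unfolding G2_def rX_def by (rule nn_integral_sum) measurable
    also have "\<dots> = (\<Sum>i<n. (\<integral>\<^sup>+\<omega>. rind T i \<omega> \<partial>stream_space M0) * ennreal s)"
      unfolding Ysq[symmetric]
      by (intro sum.cong refl indep[where h="\<lambda>e. ennreal ((w + Yc e)\<^sup>2)"]) (auto dest: rind_dep[where T=T])
    finally show ?thesis unfolding rU_def n_def by (simp add: sum_distrib_right)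
  qed
  have pw: "G1 \<omega> \<le> ennreal T + ennreal \<epsilon> * G2 \<omega> + ennreal (1/(4*\<epsilon>))" for \<omega>
  proof -
    have R: "(\<Sum>i<n. if (\<Sum>j<i. rX j \<omega>) \<le> T then rX i \<omega> else 0)
      \<le> T + \<epsilon> * (\<Sum>i<n. if (\<Sum>j<i. rX j \<omega>) \<le> T then (rX i \<omega>)\<^sup>2 else 0) + 1/(4*\<epsilon>)"
      by (rule renewal_pointwise[OF rX_nn T e])
    have g1: "G1 \<omega> = ennreal (\<Sum>i<n. if (\<Sum>j<i. rX j \<omega>) \<le> T then rX i \<omega> else 0)"
      unfolding G1_def ind_real rD_def using rX_nn by (subst sum_ennreal) auto
    have g2: "G2 \<omega> = ennreal (\<Sum>i<n. if (\<Sum>j<i. rX j \<omega>) \<le> T then (rX i \<omega>)\<^sup>2 else 0)"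
      unfolding G2_def ind_real rD_def by (subst sum_ennreal) auto
    have nnQ: "0 \<le> (\<Sum>i<n. if (\<Sum>j<i. rX j \<omega>) \<le> T then (rX i \<omega>)\<^sup>2 else 0)"
      by (intro sum_nonneg) auto
    have "G1 \<omega> \<le> ennreal (T + \<epsilon> * (\<Sum>i<n. if (\<Sum>j<i. rX j \<omega>) \<le> T then (rX i \<omega>)\<^sup>2 else 0) + 1/(4*\<epsilon>))"
      unfolding g1 by (rule ennreal_leI[OF R])
    also have "\<dots> = ennreal T + ennreal \<epsilon> * G2 \<omega> + ennreal (1/(4*\<epsilon>))"
      unfolding g2 using T e nnQ by (simp add: ennreal_plus ennreal_mult)
    finally show ?thesis .
  qed
  have "rU T * ennreal (w+\<mu>) = (\<integral>\<^sup>+\<omega>. G1 \<omega> \<partial>stream_space M0)" using I1 by simp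
  also have "\<dots> \<le> (\<integral>\<^sup>+\<omega>. ennreal T + ennreal \<epsilon> * G2 \<omega> + ennreal (1/(4*\<epsilon>)) \<partial>stream_space M0)"
    by (intro nn_integral_mono pw)
  also have "\<dots> = ennreal T + ennreal \<epsilon> * (rU T * ennreal s) + ennreal (1/(4*\<epsilon>))"
    by (simp add: nn_integral_add nn_integral_cmult S.emeasure_space_1 I2)
  finally show ?thesis .
qed

lemma rU_le: "rU T \<le> of_nat (rN T)"
proof -
  interpret S: prob_space "stream_space M0" by (rule S)
  have "rU T \<le> (\<Sum>i<rN T. (1::ennreal))"
    unfolding rU_def
  proof (intro sum_mono)
    fix i
    have "(\<integral>\<^sup>+\<omega>. rind T i \<omega> \<partial>stream_space M0) \<le> (\<integral>\<^sup>+\<omega>. 1 \<partial>stream_space M0)"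
      by (intro nn_integral_mono) (simp add: rind_def)
    then show "(\<integral>\<^sup>+\<omega>. rind T i \<omega> \<partial>stream_space M0) \<le> 1" by (simp add: S.emeasure_space_1)
  qed
  then show ?thesis by simp
qed

end



lemma real_part:
  fixes m s c r u :: real
  assumes m: "0 < m" and s: "0 \<le> s" and c: "0 \<le> c" and r1: "1 \<le> r" and rs: "s/m + 1 \<le> r" and u: "0 \<le> u"
    and H: "u*m \<le> r\<^sup>2 + (1/r)*(u * s) + 1/(4*(1/r))"
  shows "u*c/r\<^sup>2 \<le> c*(1 + (1/r)/4)/(m - s * (1/r))"
proof -
  have rp: "0 < r" using r1 by simp
  have "s/m < r" using rs by linarith
  then have "s < m * r" using m by (simp add: divide_less_eq mult.commute)
  then have d: "0 < m - s * (1/r)" using rp by (simp add: field_simps)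
  have "u * (m - s * (1/r)) \<le> r\<^sup>2 + r/4" using H rp by (simp add: field_simps)
  then have u1: "u \<le> (r\<^sup>2 + r/4) / (m - s * (1/r))" using d by (subst pos_le_divide_eq[OF d])
  have "u*c/r\<^sup>2 \<le> ((r\<^sup>2 + r/4) / (m - s * (1/r))) * c / r\<^sup>2"
    using u1 c rp by (intro divide_right_mono mult_right_mono) auto
  also have "\<dots> = c*(1 + (1/r)/4)/(m - s * (1/r))"
    using rp d by (simp add: field_simps power2_eq_square)
  finally show ?thesis .
qed


context rr begin

lemma limit_bound:
  assumes c: "0 \<le> c" and F: "eventually (\<lambda>T. F T \<le> rU T * ennreal c) at_top"
  shows "Limsup at_top (\<lambda>T. F T / ennreal T) \<le> ennreal (c/(w+\<mu>))"
proof -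
  define m where "m = w+\<mu>"
  have m: "0 < m" unfolding m_def using w_pos mu_nn by simp
  define g where "g T = c*(1 + inverse (sqrt T)/4)/(m - s * inverse (sqrt T))" for T
  have q: "((\<lambda>T. inverse (sqrt T)) \<longlongrightarrow> 0) at_top"
    by (rule tendsto_inverse_0_at_top[OF sqrt_at_top])
  have "((\<lambda>T. c*(1 + inverse (sqrt T)/4)/(m - s * inverse (sqrt T))) \<longlongrightarrow> c*(1+0/4)/(m - s*0)) at_top"
    by (intro tendsto_intros q) (use m in auto)
  then have lim: "(g \<longlongrightarrow> c/m) at_top" unfolding g_def by simp
  have ev: "eventually (\<lambda>T. F T / ennreal T \<le> ennreal (g T)) at_top"
    using F eventually_ge_at_top[of "max 1 ((s/m+1)\<^sup>2)"]
  proof eventually_elim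
    case (elim T)
    define r where "r = sqrt T"
    have T1: "1 \<le> T" using elim(2) by simp
    have r1: "1 \<le> r" unfolding r_def using T1 by simp
    have rs: "s/m + 1 \<le> r" unfolding r_def using elim(2) by (intro real_le_rsqrt) simp
    have Tr: "T = r\<^sup>2" unfolding r_def using T1 by simp
    have rp: "0 < r" using r1 by simp
    have fin: "rU T < top" using rU_le[of T] by (simp add: le_less_trans[OF _ of_nat_less_top])
    define u where "u = enn2real (rU T)"
    have U: "rU T = ennreal u" unfolding u_def using fin by simp
    have u0: "0 \<le> u" unfolding u_def by simp
    have R: "rU T * ennreal (w+\<mu>) \<le> ennreal T + ennreal (1/r) * (rU T * ennreal s) + ennreal (1/(4*(1/r)))"
      by (rule renewal) (use T1 rp in auto)
    have a1: "rU T * ennreal (w+\<mu>) = ennreal (u*m)"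
      unfolding U m_def[symmetric] using u0 m by (simp add: ennreal_mult)
    have a2: "ennreal (1/r) * (rU T * ennreal s) = ennreal ((1/r)*(u * s))"
      unfolding U using u0 s_nn rp by (simp add: ennreal_mult[symmetric])
    have a3: "ennreal T + ennreal ((1/r)*(u * s)) + ennreal (1/(4*(1/r))) = ennreal (T + (1/r)*(u * s) + 1/(4*(1/r)))"
    proof -
      have T0: "0 \<le> T" using T1 by simp
      have nn1: "0 \<le> (1/r)*(u * s)" using u0 s_nn rp by simp
      have nn2: "0 \<le> 1/(4*(1/r))" using rp by simp
      show ?thesis by (simp only: ennreal_plus[OF add_nonneg_nonneg[OF T0 nn1] nn2] ennreal_plus[OF T0 nn1])
    qed
    have "ennreal (u*m) \<le> ennreal (T + (1/r)*(u * s) + 1/(4*(1/r)))"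
      using R unfolding a1 a2 a3 .
    then have H: "u*m \<le> r\<^sup>2 + (1/r)*(u * s) + 1/(4*(1/r))"
      unfolding Tr using u0 s_nn rp by (subst (asm) ennreal_le_iff) (auto intro!: add_nonneg_nonneg)
    have key: "u*c/r\<^sup>2 \<le> g T"
      unfolding g_def r_def[symmetric] using real_part[OF m s_nn c r1 rs u0 H] by (simp add: inverse_eq_divide)
    have "F T / ennreal T \<le> (ennreal u * ennreal c) / ennreal T"
      using elim(1) unfolding U by (rule divide_right_mono_ennreal)
    also have "\<dots> = ennreal (u*c/T)" using u0 c T1 by (simp add: ennreal_mult[symmetric] divide_ennreal)
    also have "\<dots> \<le> ennreal (g T)" using key Tr by (intro ennreal_leI) simp
    finally show ?case .
  qed
  have "Limsup at_top (\<lambda>T. F T / ennreal T) \<le> Limsup at_top (\<lambda>T. ennreal (g T))"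
    by (rule Limsup_mono[OF ev])
  also have "\<dots> = ennreal (c/m)"
    by (rule lim_imp_Limsup) (auto intro!: tendsto_ennrealI lim)
  finally show ?thesis unfolding m_def .
qed

end

definition pol :: "'r \<Rightarrow> real \<Rightarrow> 'r policy" where
  "pol k w = (\<lambda>y a. (if a k then k else (SOME j. a j), w))"

lemma pol_admissible: "0 \<le> w \<Longrightarrow> admissible (pol k w)"
  unfolding admissible_def pol_def by (auto intro: someI_ex)

lemma pol_route: "A (\<omega>!!i) k \<Longrightarrow> route (pol k w) A Y \<omega> i = k"
  unfolding route_def pol_def by simp

lemma pol_wait: "wait (pol k w) A Y \<omega> i = w"
  unfolding wait_def pol_def by simp

lemma pol_last: "A (\<omega>!!i) k \<Longrightarrow> lastdelay (pol k w) A Y \<omega> (Suc i) = Y (\<omega>!!Suc i) k"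
  unfolding pol_def by simp

lemma pol_deliv: "(\<forall>i. A (\<omega>!!i) k) \<Longrightarrow> deliv (pol k w) A Y \<omega> i = (\<Sum>j<i. w + Y (\<omega>!!Suc j) k)"
  by (induction i) (simp_all add: wait_def pol_def)

lemma samp_eq: "samp \<pi> A Y \<omega> i = deliv \<pi> A Y \<omega> i - lastdelay \<pi> A Y \<omega> i"
  by (cases i) auto

lemma limit_right:
  fixes m sg a :: real and opt :: ennreal
  assumes m: "0 < m" and a: "0 \<le> a"
    and key: "\<And>w. a < w \<Longrightarrow> opt \<le> ennreal ((3 * m + w) / 2 + sg\<^sup>2 / (2 * (m + w)))"
  shows "opt \<le> ennreal ((3 * m + a) / 2 + sg\<^sup>2 / (2 * (m + a)))"
proof (rule tendsto_lowerbound)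
  have c: "isCont (\<lambda>w. (3 * m + w) / 2 + sg\<^sup>2 / (2 * (m + w))) a"
    using m a by (intro continuous_intros) auto
  have "((\<lambda>w. (3 * m + w) / 2 + sg\<^sup>2 / (2 * (m + w))) \<longlongrightarrow> (3 * m + a) / 2 + sg\<^sup>2 / (2 * (m + a))) (at_right a)"
    using c unfolding isCont_def by (rule tendsto_mono[OF at_le, rotated]) simp
  then show "((\<lambda>w. ennreal ((3 * m + w) / 2 + sg\<^sup>2 / (2 * (m + w)))) \<longlongrightarrow> ennreal ((3 * m + a) / 2 + sg\<^sup>2 / (2 * (m + a)))) (at_right a)"
    by (rule tendsto_ennrealI)
  show "\<forall>\<^sub>F w in at_right a. opt \<le> ennreal ((3 * m + w) / 2 + sg\<^sup>2 / (2 * (m + w)))"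
    using eventually_at_right_less[of a] by eventually_elim (rule key)
  show "\<not> trivial_limit (at_right a)" by (rule trivial_limit_at_right_real)
qed

theorem lemma3:
  fixes M0 :: "'e measure"
    and A :: "'e \<Rightarrow> 'r::finite \<Rightarrow> bool"
    and Y :: "'e \<Rightarrow> 'r \<Rightarrow> real"
    and p \<mu> \<sigma> G :: "'r \<Rightarrow> real"
    and Cs Emax :: real
  assumes M0: "prob_space M0"
    and A_meas: "\<And>k. (\<lambda>e. A e k) \<in> measurable M0 (count_space UNIV)"
    and p_range: "\<And>k. 0 < p k \<and> p k \<le> 1"
    and p_prob: "\<And>k. measure M0 {e \<in> space M0. A e k} = p k"
    and Rinf_ne: "{k. p k = 1} \<noteq> {}"
    and Y_meas: "\<And>k. (\<lambda>e. Y e k) \<in> borel_measurable M0"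
    and Y_nonneg: "\<And>k. AE e in M0. 0 \<le> Y e k"
    and Y_int: "\<And>k. integrable M0 (\<lambda>e. Y e k)"
    and Y_mean: "\<And>k. prob_space.expectation M0 (\<lambda>e. Y e k) = \<mu> k"
    and mu_pos: "\<And>k. 0 < \<mu> k"
    and Y_sq_int: "\<And>k. integrable M0 (\<lambda>e. (Y e k)\<^sup>2)"
    and Y_var: "\<And>k. prob_space.variance M0 (\<lambda>e. Y e k) = (\<sigma> k)\<^sup>2"
    and Cs_pos: "0 < Cs"
    and G_nonneg: "\<And>k. 0 \<le> G k"
    and Emax_pos: "0 < Emax"
  shows "0 \<le> opt_aoi M0 A Y Cs G Emax \<and>
         opt_aoi M0 A Y Cs G Emax \<le>
           ennreal (Min ((\<lambda>k. let w = max 0 ((Cs + G k * \<mu> k) / Emax - \<mu> k) in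
                               (3 * \<mu> k + w) / 2 + (\<sigma> k)\<^sup>2 / (2 * (\<mu> k + w)))
                         ` {k. p k = 1}))"
proof -
  interpret P: prob_space M0 by (rule M0)
  interpret S: prob_space "stream_space M0" by (rule P.prob_space_stream_space)
  define F where "F k w = (3 * \<mu> k + w) / 2 + (\<sigma> k)\<^sup>2 / (2 * (\<mu> k + w))" for k w
  define wk where "wk k = max 0 ((Cs + G k * \<mu> k) / Emax - \<mu> k)" for k
  let ?opt = "opt_aoi M0 A Y Cs G Emax"
  have key: "?opt \<le> ennreal (F k w)" if pk: "p k = 1" and wgt: "wk k < w" for k w
  proof -
    have w_pos: "0 < w" using wgt unfolding wk_def by linarith
    define Yc where "Yc e = max 0 (Y e k)" for e
    define s where "s = (w + \<mu> k)\<^sup>2 + (\<sigma> k)\<^sup>2"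
    define \<pi> where "\<pi> = pol k w"
    note [measurable] = Y_meas A_meas
    have Yc_meas[measurable]: "Yc \<in> borel_measurable M0" unfolding Yc_def by measurable
    have AEA: "AE e in M0. A e k"
    proof -
      have "AE e in M0. e \<in> {e \<in> space M0. A e k}"
        by (rule P.AE_prob_1) (use p_prob pk in simp)
      then show ?thesis by eventually_elim simp
    qed
    have AEgood: "AE \<omega> in stream_space M0. stream_all (\<lambda>e. A e k \<and> 0 \<le> Y e k) \<omega>"
    proof (rule P.AE_stream_all)
      show "Measurable.pred M0 (\<lambda>e. A e k \<and> 0 \<le> Y e k)" by measurable
      show "AE e in M0. A e k \<and> 0 \<le> Y e k" using AEA Y_nonneg[of k] by eventually_elim simp
    qed
    have YcY: "AE e in M0. Yc e = Y e k" using Y_nonneg[of k] by eventually_elim (simp add: Yc_def)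
    have Ymean: "(\<integral>\<^sup>+e. ennreal (Yc e) \<partial>M0) = ennreal (\<mu> k)"
    proof -
      have "(\<integral>\<^sup>+e. ennreal (Yc e) \<partial>M0) = (\<integral>\<^sup>+e. ennreal (Y e k) \<partial>M0)"
        by (simp add: Yc_def ennreal_max_0)
      also have "\<dots> = ennreal (\<integral>e. Y e k \<partial>M0)"
        by (rule nn_integral_eq_integral[OF Y_int Y_nonneg])
      finally show ?thesis using Y_mean[of k] by simp
    qed
    have EY2: "(\<integral>e. (Y e k)\<^sup>2 \<partial>M0) = (\<sigma> k)\<^sup>2 + (\<mu> k)\<^sup>2"
      using P.variance_eq[OF Y_int Y_sq_int, of k] Y_var[of k] Y_mean[of k] by simp
    have Ysq: "(\<integral>\<^sup>+e. ennreal ((w + Yc e)\<^sup>2) \<partial>M0) = ennreal s"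
    proof -
      have int2: "integrable M0 (\<lambda>e. w\<^sup>2 + 2 * w * Y e k + (Y e k)\<^sup>2)"
        using Y_int Y_sq_int by auto
      have "(\<integral>\<^sup>+e. ennreal ((w + Yc e)\<^sup>2) \<partial>M0) = (\<integral>\<^sup>+e. ennreal (w\<^sup>2 + 2 * w * Y e k + (Y e k)\<^sup>2) \<partial>M0)"
        by (intro nn_integral_cong_AE) (use YcY in \<open>eventually_elim, simp add: power2_sum algebra_simps\<close>)
      also have "\<dots> = ennreal (\<integral>e. w\<^sup>2 + 2 * w * Y e k + (Y e k)\<^sup>2 \<partial>M0)"
      proof (rule nn_integral_eq_integral[OF int2])
        show "AE e in M0. 0 \<le> w\<^sup>2 + 2 * w * Y e k + (Y e k)\<^sup>2"
          using Y_nonneg[of k] by eventually_elim (insert w_pos, auto intro!: add_nonneg_nonneg mult_nonneg_nonneg)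
      qed
      also have "(\<integral>e. w\<^sup>2 + 2 * w * Y e k + (Y e k)\<^sup>2 \<partial>M0) = w\<^sup>2 + 2 * w * \<mu> k + ((\<sigma> k)\<^sup>2 + (\<mu> k)\<^sup>2)"
        using Y_int Y_sq_int Y_mean[of k] EY2 by (simp add: P.prob_space)
      also have "\<dots> = s" unfolding s_def by (simp add: power2_sum)
      finally show ?thesis .
    qed
    interpret R: rr M0 Yc w "\<mu> k" s
      by unfold_locales (use M0 w_pos mu_pos Ymean Ysq in \<open>auto simp: Yc_def s_def less_imp_le\<close>)
    have good_facts: "route \<pi> A Y \<omega> i = k \<and> wait \<pi> A Y \<omega> i = w \<and> lastdelay \<pi> A Y \<omega> i = R.rL i \<omega>
         \<and> deliv \<pi> A Y \<omega> i = R.rD i \<omega>"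
      if g: "stream_all (\<lambda>e. A e k \<and> 0 \<le> Y e k) \<omega>" for \<omega> i
    proof -
      have gA: "\<forall>i. A (\<omega>!!i) k" and gY: "\<And>i. Y (\<omega>!!i) k = Yc (\<omega>!!i)"
        using g unfolding stream_all_def Yc_def by auto
      have "lastdelay \<pi> A Y \<omega> i = R.rL i \<omega>"
      proof (cases i)
        case (Suc j)
        have "Y (\<omega>!!Suc j) k = Yc (\<omega>!!Suc j)" by (rule gY)
        then show ?thesis using Suc gA by (simp add: \<pi>_def R.rL_def pol_def)
      qed (simp add: R.rL_def)
      moreover have "deliv \<pi> A Y \<omega> i = R.rD i \<omega>"
        unfolding \<pi>_def pol_deliv[where A=A and k=k and \<omega>=\<omega>, OF gA] R.rD_def R.rX_def gY ..
      ultimately show ?thesis using gA by (simp add: \<pi>_def pol_route pol_wait)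
    qed
    have gl: "route \<pi> A Y \<omega> i = k" "lastdelay \<pi> A Y \<omega> (Suc i) = Yc (\<omega>!!Suc i)" "wait \<pi> A Y \<omega> i = w"
      if g: "stream_all (\<lambda>e. A e k \<and> 0 \<le> Y e k) \<omega>" for \<omega> i
      using good_facts[OF g, of i] good_facts[OF g, of "Suc i"] by (simp_all add: R.rL_def)
    have adm: "admissible \<pi>" unfolding \<pi>_def using w_pos by (intro pol_admissible) simp
    have pow: "avg_power M0 A Y Cs G \<pi> \<le> ennreal Emax"
    proof -
      have strm: "(\<integral>\<^sup>+\<omega>. h (\<omega>!!Suc i) \<partial>stream_space M0) = (\<integral>\<^sup>+x. h x \<partial>M0)"
        if [measurable]: "h \<in> borel_measurable M0" for h i
        using R.indep[of "\<lambda>_. 1" i h] by (simp add: S.emeasure_space_1)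
      have Enum: "(\<integral>\<^sup>+e. ennreal (Cs + G k * Yc e) \<partial>M0) = ennreal (Cs + G k * \<mu> k)"
      proof -
        have "(\<integral>\<^sup>+e. ennreal (Cs + G k * Yc e) \<partial>M0) = (\<integral>\<^sup>+e. ennreal Cs + ennreal (G k) * ennreal (Yc e) \<partial>M0)"
          using Cs_pos G_nonneg[of k] R.Yc_nn by (intro nn_integral_cong) (simp add: ennreal_plus ennreal_mult)
        also have "\<dots> = ennreal Cs + ennreal (G k) * ennreal (\<mu> k)"
          by (simp add: nn_integral_add nn_integral_cmult Ymean P.emeasure_space_1)
        finally show ?thesis using Cs_pos G_nonneg[of k] mu_pos[of k] by (simp add: ennreal_plus ennreal_mult)
      qed
      have num: "(\<integral>\<^sup>+\<omega>. (\<Sum>i<n. ennreal (Cs + G (route \<pi> A Y \<omega> i) * lastdelay \<pi> A Y \<omega> (Suc i))) \<partial>stream_space M0)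
          = of_nat n * ennreal (Cs + G k * \<mu> k)" for n
      proof -
        have "(\<integral>\<^sup>+\<omega>. (\<Sum>i<n. ennreal (Cs + G (route \<pi> A Y \<omega> i) * lastdelay \<pi> A Y \<omega> (Suc i))) \<partial>stream_space M0)
          = (\<integral>\<^sup>+\<omega>. (\<Sum>i<n. ennreal (Cs + G k * Yc (\<omega>!!Suc i))) \<partial>stream_space M0)"
          by (intro nn_integral_cong_AE) (use AEgood in \<open>eventually_elim, simp del: lastdelay.simps add: gl\<close>)
        also have "\<dots> = (\<Sum>i<n. \<integral>\<^sup>+\<omega>. ennreal (Cs + G k * Yc (\<omega>!!Suc i)) \<partial>stream_space M0)"
          by (rule nn_integral_sum) measurable
        also have "\<dots> = (\<Sum>i<n. ennreal (Cs + G k * \<mu> k))"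
          by (intro sum.cong refl) (subst strm[of "\<lambda>e. ennreal (Cs + G k * Yc e)"], measurable, rule Enum)
        finally show ?thesis by simp
      qed
      have den: "(\<integral>\<^sup>+\<omega>. (\<Sum>i<n. ennreal (wait \<pi> A Y \<omega> i + lastdelay \<pi> A Y \<omega> (Suc i))) \<partial>stream_space M0)
          = of_nat n * ennreal (w + \<mu> k)" for n
      proof -
        have "(\<integral>\<^sup>+\<omega>. (\<Sum>i<n. ennreal (wait \<pi> A Y \<omega> i + lastdelay \<pi> A Y \<omega> (Suc i))) \<partial>stream_space M0)
          = (\<integral>\<^sup>+\<omega>. (\<Sum>i<n. ennreal (w + Yc (\<omega>!!Suc i))) \<partial>stream_space M0)"
          by (intro nn_integral_cong_AE) (use AEgood in \<open>eventually_elim, simp del: lastdelay.simps add: gl\<close>)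
        also have "\<dots> = (\<Sum>i<n. \<integral>\<^sup>+\<omega>. ennreal (w + Yc (\<omega>!!Suc i)) \<partial>stream_space M0)"
          by (rule nn_integral_sum) measurable
        also have "\<dots> = (\<Sum>i<n. ennreal (w + \<mu> k))"
          by (intro sum.cong refl) (subst strm[of "\<lambda>e. ennreal (w + Yc e)"], measurable, rule R.EX1)
        finally show ?thesis by simp
      qed
      have ratio: "(Cs + G k * \<mu> k) / (w + \<mu> k) \<le> Emax"
      proof -
        have wm: "0 < w + \<mu> k" using w_pos mu_pos[of k] by simp
        have "(Cs + G k * \<mu> k) / Emax - \<mu> k \<le> w" using wgt unfolding wk_def by linarith
        then have "(Cs + G k * \<mu> k) / Emax \<le> w + \<mu> k" by linarith
        then have "Cs + G k * \<mu> k \<le> Emax * (w + \<mu> k)" using Emax_pos by (simp add: divide_le_eq mult.commute)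
        then show ?thesis using wm by (simp add: divide_le_eq mult.commute)
      qed
      have bnd: "of_nat n * ennreal (Cs + G k * \<mu> k) / (of_nat n * ennreal (w + \<mu> k)) \<le> ennreal Emax" for n
      proof (cases "n = 0")
        case True then show ?thesis by simp
      next
        case False
        have "of_nat n * ennreal (Cs + G k * \<mu> k) / (of_nat n * ennreal (w + \<mu> k))
            = ennreal (real n * (Cs + G k * \<mu> k)) / ennreal (real n * (w + \<mu> k))"
        proof -
          have on: "ennreal (real n * x) = of_nat n * ennreal x" if "0 \<le> x" for x
            using that by (simp add: ennreal_mult ennreal_of_nat_eq_real_of_nat)
          show ?thesis using Cs_pos G_nonneg[of k] mu_pos[of k] w_pos
            by (subst (1 2) on) (auto intro!: add_nonneg_nonneg)
        qed
        also have "\<dots> = ennreal ((real n * (Cs + G k * \<mu> k)) / (real n * (w + \<mu> k)))"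
          using Cs_pos G_nonneg[of k] mu_pos[of k] w_pos False
          by (intro divide_ennreal) auto
        also have "\<dots> = ennreal ((Cs + G k * \<mu> k) / (w + \<mu> k))" using False by simp
        also have "\<dots> \<le> ennreal Emax" using ratio by (rule ennreal_leI)
        finally show ?thesis .
      qed
      show ?thesis unfolding avg_power_def num den
        by (rule Limsup_bounded) (simp add: bnd)
    qed
    have aoi: "avg_aoi M0 A Y \<pi> \<le> ennreal (F k w)"
    proof -
      define c where "c = \<mu> k * (w + \<mu> k) + s/2"
      have c0: "0 \<le> c" unfolding c_def s_def using mu_pos[of k] w_pos by (intro add_nonneg_nonneg) auto
      have pt: "(\<integral>\<^sup>+t. indicator {0..T} t * aoi \<pi> A Y \<omega> t \<partial>lborel)
          \<le> (\<Sum>i<R.rN T. R.rind T i \<omega> * ennreal (R.rL i \<omega> * R.rX i \<omega> + (R.rX i \<omega>)\<^sup>2/2))"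
        if g: "stream_all (\<lambda>e. A e k \<and> 0 \<le> Y e k) \<omega>" for \<omega> T
      proof -
        note gf = good_facts[OF g]
        have sd: "samp \<pi> A Y \<omega> i \<le> deliv \<pi> A Y \<omega> i" for i
          using samp_eq[of \<pi> A Y \<omega> i] gf[of i] R.rL_nn[of i \<omega>] by simp
        have dm: "deliv \<pi> A Y \<omega> i \<le> deliv \<pi> A Y \<omega> (Suc i)" for i
          using gf[of i] gf[of "Suc i"] R.rD_mono[of i \<omega>] by simp
        have "(\<integral>\<^sup>+t. indicator {0..T} t * aoi \<pi> A Y \<omega> t \<partial>lborel)
          \<le> (\<Sum>i. (if deliv \<pi> A Y \<omega> i \<le> T then ennreal (((deliv \<pi> A Y \<omega> (Suc i) - samp \<pi> A Y \<omega> i)\<^sup>2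
                 - (deliv \<pi> A Y \<omega> i - samp \<pi> A Y \<omega> i)\<^sup>2)/2) else 0))"
          unfolding aoi_def by (rule aoi_bound[where d="deliv \<pi> A Y \<omega>" and s="samp \<pi> A Y \<omega>" and T=T, OF sd dm])
        also have "\<dots> = (\<Sum>i. R.rind T i \<omega> * ennreal (R.rL i \<omega> * R.rX i \<omega> + (R.rX i \<omega>)\<^sup>2/2))"
        proof (intro suminf_cong)
          fix i
          have e1: "deliv \<pi> A Y \<omega> i - samp \<pi> A Y \<omega> i = R.rL i \<omega>"
            using samp_eq[of \<pi> A Y \<omega> i] gf[of i] by simp
          have e2: "deliv \<pi> A Y \<omega> (Suc i) - samp \<pi> A Y \<omega> i = R.rL i \<omega> + R.rX i \<omega>"
            using samp_eq[of \<pi> A Y \<omega> i] gf[of i] gf[of "Suc i"] by (simp add: R.rD_def)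
          have e3: "((R.rL i \<omega> + R.rX i \<omega>)\<^sup>2 - (R.rL i \<omega>)\<^sup>2)/2 = R.rL i \<omega> * R.rX i \<omega> + (R.rX i \<omega>)\<^sup>2/2"
            by (simp add: power2_eq_square algebra_simps)
          show "(if deliv \<pi> A Y \<omega> i \<le> T then ennreal (((deliv \<pi> A Y \<omega> (Suc i) - samp \<pi> A Y \<omega> i)\<^sup>2
                 - (deliv \<pi> A Y \<omega> i - samp \<pi> A Y \<omega> i)\<^sup>2)/2) else 0)
              = R.rind T i \<omega> * ennreal (R.rL i \<omega> * R.rX i \<omega> + (R.rX i \<omega>)\<^sup>2/2)"
            unfolding e1 e2 e3 R.rind_def using gf[of i] by simp
        qed
        also have "\<dots> = (\<Sum>i<R.rN T. R.rind T i \<omega> * ennreal (R.rL i \<omega> * R.rX i \<omega> + (R.rX i \<omega>)\<^sup>2/2))"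
          by (rule suminf_finite) (auto simp: R.rind_zero not_less)
        finally show ?thesis .
      qed
      have "avg_aoi M0 A Y \<pi> \<le> ennreal (c / (w + \<mu> k))"
        unfolding avg_aoi_def
      proof (rule R.limit_bound[OF c0])
        show "\<forall>\<^sub>F T in at_top. (\<integral>\<^sup>+\<omega>. (\<integral>\<^sup>+t. indicator {0..T} t * aoi \<pi> A Y \<omega> t \<partial>lborel) \<partial>stream_space M0)
            \<le> R.rU T * ennreal c"
        proof (intro always_eventually allI)
          fix T
          have "(\<integral>\<^sup>+\<omega>. (\<integral>\<^sup>+t. indicator {0..T} t * aoi \<pi> A Y \<omega> t \<partial>lborel) \<partial>stream_space M0)
             \<le> (\<integral>\<^sup>+\<omega>. (\<Sum>i<R.rN T. R.rind T i \<omega> * ennreal (R.rL i \<omega> * R.rX i \<omega> + (R.rX i \<omega>)\<^sup>2/2)) \<partial>stream_space M0)"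
          proof (rule nn_integral_mono_AE)
            show "AE \<omega> in stream_space M0. (\<integral>\<^sup>+t. indicator {0..T} t * aoi \<pi> A Y \<omega> t \<partial>lborel)
               \<le> (\<Sum>i<R.rN T. R.rind T i \<omega> * ennreal (R.rL i \<omega> * R.rX i \<omega> + (R.rX i \<omega>)\<^sup>2/2))"
              using AEgood by eventually_elim (rule pt)
          qed
          also have "\<dots> \<le> R.rU T * ennreal c" unfolding c_def by (rule R.main_bound)
          finally show "(\<integral>\<^sup>+\<omega>. (\<integral>\<^sup>+t. indicator {0..T} t * aoi \<pi> A Y \<omega> t \<partial>lborel) \<partial>stream_space M0)
             \<le> R.rU T * ennreal c" .
        qed
      qed
      also have "c / (w + \<mu> k) = F k w"
        unfolding c_def s_def F_def using w_pos mu_pos[of k]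
        by (simp add: field_simps power2_eq_square)
      finally show ?thesis .
    qed
    have "?opt \<le> avg_aoi M0 A Y \<pi>"
      unfolding opt_aoi_def by (rule INF_lower) (use adm pow in simp)
    also note aoi
    finally show ?thesis .
  qed
  have key2: "?opt \<le> ennreal (F k (wk k))" if pk: "p k = 1" for k
  proof -
    have wk0: "0 \<le> wk k" unfolding wk_def by simp
    show ?thesis unfolding F_def
      by (rule limit_right[OF mu_pos[of k] wk0]) (rule key[OF pk, unfolded F_def])
  qed
  have fin: "finite {k. p k = 1}" by simp
  obtain k0 where k0: "k0 \<in> {k. p k = 1}"
    and kmin: "Min ((\<lambda>k. F k (wk k)) ` {k. p k = 1}) = F k0 (wk k0)"
  proof -
    have "Min ((\<lambda>k. F k (wk k)) ` {k. p k = 1}) \<in> (\<lambda>k. F k (wk k)) ` {k. p k = 1}"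
      using fin Rinf_ne by (intro Min_in) auto
    then show ?thesis using that by blast
  qed
  have le: "?opt \<le> ennreal (Min ((\<lambda>k. F k (wk k)) ` {k. p k = 1}))"
    unfolding kmin using key2 k0 by simp
  have eq: "(\<lambda>k. let w = max 0 ((Cs + G k * \<mu> k) / Emax - \<mu> k) in
                               (3 * \<mu> k + w) / 2 + (\<sigma> k)\<^sup>2 / (2 * (\<mu> k + w))) = (\<lambda>k. F k (wk k))"
    unfolding F_def wk_def Let_def by (rule refl)
  show ?thesis
  proof (intro conjI)
    show "0 \<le> ?opt" by (rule zero_le)
    show "?opt \<le> ennreal (Min ((\<lambda>k. let w = max 0 ((Cs + G k * \<mu> k) / Emax - \<mu> k) in
                               (3 * \<mu> k + w) / 2 + (\<sigma> k)\<^sup>2 / (2 * (\<mu> k + w))) ` {k. p k = 1}))"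
      unfolding eq by (rule le)
  qed
qed

end
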